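(* Let $U$ be a nonempty set and let $\pi,\sigma$ be partitions of $U$. Let $G(\sigma\Rightarrow\pi)$ be the simple undirected graph with vertex set $U$ in which two distinct elements $u,u'$ are adjacent if and only if $u,u'$ lie in the same block of $\pi$ but in different blocks of $\sigma$. Define the partition $\sigma\Rightarrow\pi$ of $U$ as follows: for each block $B\in\pi$, if there is a block $C\in\sigma$ with $B\subseteq C$, then $B$ is replaced by the singletons $\{u\}$, $u\in B$; otherwise $B$ is kept as a single block. Then the partition of $U$ into the connected components of $G(\sigma\Rightarrow\pi)$ equals $\sigma\Rightarrow\pi$.
   Context: A partition of $U$ is a set of pairwise disjoint nonempty subsets of $U$ (blocks) whose union is $U$. The graph $G(\sigma\Rightarrow\pi)$ arises from labelling each edge $u-u'$ of the complete graph on $U$ with $T_\pi$ if $u,u'$ are in different blocks of $\pi$ and $F_\pi$ otherwise (similarly for $\sigma$) and keeping exactly the edges on which the Boolean conditional $\sigma\supset\pi$ of the two truth values is $F$, i.e. those labelled $T_\sigma,F_\pi$. *)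

theory Defs
  imports "HOL-Library.Disjoint_Sets"
begin

definition imp_adj :: "'a set set \<Rightarrow> 'a set set \<Rightarrow> 'a \<Rightarrow> 'a \<Rightarrow> bool" where
  "imp_adj \<sigma> \<pi> u u' \<longleftrightarrow> u \<noteq> u' \<and> (\<exists>B\<in>\<pi>. u \<in> B \<and> u' \<in> B) \<and> \<not> (\<exists>C\<in>\<sigma>. u \<in> C \<and> u' \<in> C)"

definition graph_components :: "'a set \<Rightarrow> ('a \<Rightarrow> 'a \<Rightarrow> bool) \<Rightarrow> 'a set set" where
  "graph_components U adj =
     {{v \<in> U. (\<lambda>x y. x \<in> U \<and> y \<in> U \<and> adj x y)\<^sup>*\<^sup>* u v} | u. u \<in> U}"

definition partition_imp :: "'a set set \<Rightarrow> 'a set set \<Rightarrow> 'a set set" where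
  "partition_imp \<sigma> \<pi> =
     {B \<in> \<pi>. \<not> (\<exists>C\<in>\<sigma>. B \<subseteq> C)} \<union>
     (\<Union>B \<in> {B \<in> \<pi>. \<exists>C\<in>\<sigma>. B \<subseteq> C}. (\<lambda>u. {u}) ` B)"

end

theory Submission
  imports Defs
begin

lemma part_uniq:
  assumes "partition_on U P" "B \<in> P" "B' \<in> P" "u \<in> B" "u \<in> B'"
  shows "B = B'"
  using assms unfolding partition_on_def disjoint_def by blast

lemma comp_lemma:
  assumes pi: "partition_on U \<pi>" and sg: "partition_on U \<sigma>"
    and B: "B \<in> \<pi>" and u: "u \<in> B"
  shows "{v \<in> U. (\<lambda>x y. x \<in> U \<and> y \<in> U \<and> imp_adj \<sigma> \<pi> x y)\<^sup>*\<^sup>* u v}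
         = (if \<exists>C\<in>\<sigma>. B \<subseteq> C then {u} else B)"
proof -
  let ?R = "\<lambda>x y. x \<in> U \<and> y \<in> U \<and> imp_adj \<sigma> \<pi> x y"
  have BU: "B \<subseteq> U" using pi B unfolding partition_on_def by blast
  have uU: "u \<in> U" using BU u by blast
  have stay: "?R x y \<Longrightarrow> x \<in> B \<Longrightarrow> y \<in> B" for x y
  proof -
    assume r: "?R x y" and x: "x \<in> B"
    then obtain B' where B': "B' \<in> \<pi>" "x \<in> B'" "y \<in> B'" unfolding imp_adj_def by blast
    have "B' = B" using part_uniq[OF pi B'(1) B B'(2) x] .
    then show "y \<in> B" using B' by simp
  qed
  have reachB: "?R\<^sup>*\<^sup>* u v \<Longrightarrow> v \<in> B" for v
    by (induction rule: rtranclp_induct) (use u stay in auto)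
  show ?thesis
  proof (cases "\<exists>C\<in>\<sigma>. B \<subseteq> C")
    case True
    then obtain C where C: "C \<in> \<sigma>" "B \<subseteq> C" by blast
    have noedge: "\<not> ?R x y" if "x \<in> B" for x y
    proof
      assume r: "?R x y"
      then have "y \<in> B" using stay that by blast
      then show False using r that C unfolding imp_adj_def by blast
    qed
    have "?R\<^sup>*\<^sup>* u v \<Longrightarrow> v = u" for v
    proof (induction rule: rtranclp_induct)
      case base then show ?case by simp
    next
      case (step y z) then show ?case using noedge u by blast
    qed
    then show ?thesis using True uU by auto
  next
    case False
    have "?R\<^sup>*\<^sup>* u v" if v: "v \<in> B" for v
    proof -
      have vU: "v \<in> U" using v BU by blast
      show ?thesis
      proof (cases "\<exists>C\<in>\<sigma>. u \<in> C \<and> v \<in> C")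
        case False
        have "u \<noteq> v"
        proof
          assume "u = v"
          obtain C where "C \<in> \<sigma>" "u \<in> C" using uU sg unfolding partition_on_def by blast
          then show False using False \<open>u = v\<close> by blast
        qed
        then have "?R u v" using u v B uU vU False unfolding imp_adj_def by blast
        then show ?thesis by blast
      next
        case True
        then obtain C where C: "C \<in> \<sigma>" "u \<in> C" "v \<in> C" by blast
        from \<open>\<not> (\<exists>C\<in>\<sigma>. B \<subseteq> C)\<close> C obtain w where w: "w \<in> B" "w \<notin> C" by blast
        have wU: "w \<in> U" using w BU by blast
        have nC: "\<not> (\<exists>C'\<in>\<sigma>. x \<in> C' \<and> w \<in> C')" if "x \<in> C" for x
        proof
          assume "\<exists>C'\<in>\<sigma>. x \<in> C' \<and> w \<in> C'"
          then obtain C' where C': "C' \<in> \<sigma>" "x \<in> C'" "w \<in> C'" by blast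
          have "C' = C" using part_uniq[OF sg C'(1) C(1) C'(2) that] .
          then show False using C' w by simp
        qed
        have uw: "u \<noteq> w" "w \<noteq> v" using C w by auto
        have "?R u w" unfolding imp_adj_def
          using nC[OF C(2)] u w B uU wU uw by (intro conjI) blast+
        moreover have "?R w v" unfolding imp_adj_def
          using nC[OF C(3)] v w B vU wU uw by (intro conjI) blast+
        ultimately show ?thesis by (rule rtranclp.rtrancl_into_rtrancl[OF r_into_rtranclp])
      qed
    qed
    then show ?thesis using False reachB BU by auto
  qed
qed

theorem mainTheorem3:
  fixes U :: "'a set" and \<pi> \<sigma> :: "'a set set"
  assumes "U \<noteq> {}"
    and "partition_on U \<pi>"
    and "partition_on U \<sigma>"
  shows "graph_components U (imp_adj \<sigma> \<pi>) = partition_imp \<sigma> \<pi>"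
proof
  note cl = comp_lemma[OF assms(2,3)]
  show "graph_components U (imp_adj \<sigma> \<pi>) \<subseteq> partition_imp \<sigma> \<pi>"
  proof
    fix X assume "X \<in> graph_components U (imp_adj \<sigma> \<pi>)"
    then obtain u where u: "u \<in> U"
      and X: "X = {v \<in> U. (\<lambda>x y. x \<in> U \<and> y \<in> U \<and> imp_adj \<sigma> \<pi> x y)\<^sup>*\<^sup>* u v}"
      unfolding graph_components_def by blast
    obtain B where B: "B \<in> \<pi>" "u \<in> B" using u assms(2) unfolding partition_on_def by blast
    show "X \<in> partition_imp \<sigma> \<pi>"
      using cl[OF B] X B unfolding partition_imp_def by (auto split: if_splits)
  qed
next
  note cl = comp_lemma[OF assms(2,3)]
  show "partition_imp \<sigma> \<pi> \<subseteq> graph_components U (imp_adj \<sigma> \<pi>)"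
  proof
    fix X assume "X \<in> partition_imp \<sigma> \<pi>"
    then have "(X \<in> \<pi> \<and> \<not> (\<exists>C\<in>\<sigma>. X \<subseteq> C)) \<or>
      (\<exists>B\<in>\<pi>. (\<exists>C\<in>\<sigma>. B \<subseteq> C) \<and> (\<exists>u\<in>B. X = {u}))"
      unfolding partition_imp_def by auto
    then consider (a) "X \<in> \<pi>" "\<not> (\<exists>C\<in>\<sigma>. X \<subseteq> C)"
      | (b) B u where "B \<in> \<pi>" "\<exists>C\<in>\<sigma>. B \<subseteq> C" "u \<in> B" "X = {u}"
      by blast
    then show "X \<in> graph_components U (imp_adj \<sigma> \<pi>)"
    proof cases
      case a
      have "X \<noteq> {}" using a(1) assms(2) unfolding partition_on_def by auto
      then obtain u where u: "u \<in> X" by blast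
      have "u \<in> \<Union>\<pi>" using u a(1) by blast
      then have uU: "u \<in> U" using assms(2) unfolding partition_on_def by simp
      have "X = {v \<in> U. (\<lambda>x y. x \<in> U \<and> y \<in> U \<and> imp_adj \<sigma> \<pi> x y)\<^sup>*\<^sup>* u v}"
        using cl[OF a(1) u] a(2) by simp
      then show ?thesis using uU unfolding graph_components_def by blast
    next
      case b
      have "u \<in> \<Union>\<pi>" using b(1,3) by blast
      then have uU: "u \<in> U" using assms(2) unfolding partition_on_def by simp
      have "X = {v \<in> U. (\<lambda>x y. x \<in> U \<and> y \<in> U \<and> imp_adj \<sigma> \<pi> x y)\<^sup>*\<^sup>* u v}"
        using cl[OF b(1,3)] b(2,4) by simp
      then show ?thesis using uU unfolding graph_components_def by blast
    qed
  qed
qed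

end
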